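(* Let $\{|0\rangle,|1\rangle\}$ be an orthonormal basis of $\mathbb{C}^2$ and $\{|0'\rangle,|1'\rangle,|2'\rangle\}$ an orthonormal basis of $\mathbb{C}^3$. Consider in $\mathbb{C}^2\otimes\mathbb{C}^3$ the three states $$\tfrac{1}{\sqrt2}(|0\rangle|0'\rangle-|1\rangle|1'\rangle),\quad \tfrac{1}{\sqrt2}(|0\rangle|1'\rangle+|1\rangle|0'\rangle),\quad \tfrac{1}{\sqrt2}(|0\rangle|1'\rangle-|1\rangle|0'\rangle)$$ (i.e. the set $\{\tfrac{1}{\sqrt2}(|00'\rangle\pm|11'\rangle),\tfrac{1}{\sqrt2}(|01'\rangle\pm|10'\rangle)\}$ with the state $\tfrac{1}{\sqrt2}(|00'\rangle+|11'\rangle)$ removed). Then the orthogonal complement in $\mathbb{C}^2\otimes\mathbb{C}^3$ of the span of these three states does not contain three pairwise orthogonal maximally entangled states; hence these three states cannot be completed to an orthonormal basis of $\mathbb{C}^2\otimes\mathbb{C}^3$ consisting of maximally entangled states.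
   Context: A pure state of $\mathbb{C}^2\otimes\mathbb{C}^3$ is maximally entangled if it has two equal nonzero Schmidt coefficients, equivalently its reduced state on the qubit is the maximally mixed state $I/2$. *)

theory Defs
  imports "HOL-Analysis.Analysis"
begin

text \<open>A vector of C^2 (x) C^3 is modelled as its coefficient matrix complex ^ 3 ^ 2:
  psi $ i $ j is the coefficient of the product basis vector e_i (x) f_j
  with respect to the standard bases.\<close>

type_synonym qubit = "complex ^ 2"
type_synonym qutrit = "complex ^ 3"
type_synonym bistate = "complex ^ 3 ^ 2"

definition cinner :: "complex ^ 'n \<Rightarrow> complex ^ 'n \<Rightarrow> complex" where
  "cinner x y = (\<Sum>i\<in>UNIV. cnj (x $ i) * y $ i)"

definition binner :: "bistate \<Rightarrow> bistate \<Rightarrow> complex" where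
  "binner psi phi = (\<Sum>i\<in>UNIV. \<Sum>j\<in>UNIV. cnj (psi $ i $ j) * phi $ i $ j)"

definition tensor :: "qubit \<Rightarrow> qutrit \<Rightarrow> bistate" where
  "tensor a b = (\<chi> i j. a $ i * b $ j)"

definition bscale :: "complex \<Rightarrow> bistate \<Rightarrow> bistate" where
  "bscale c psi = (\<chi> i j. c * psi $ i $ j)"

definition onb2 :: "qubit \<Rightarrow> qubit \<Rightarrow> bool" where
  "onb2 e0 e1 \<longleftrightarrow> cinner e0 e0 = 1 \<and> cinner e1 e1 = 1 \<and> cinner e0 e1 = 0"

definition onb3 :: "qutrit \<Rightarrow> qutrit \<Rightarrow> qutrit \<Rightarrow> bool" where
  "onb3 f0 f1 f2 \<longleftrightarrow> cinner f0 f0 = 1 \<and> cinner f1 f1 = 1 \<and> cinner f2 f2 = 1 \<and>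
     cinner f0 f1 = 0 \<and> cinner f0 f2 = 0 \<and> cinner f1 f2 = 0"

text \<open>Reduced state on the qubit: partial trace over C^3 of |psi><psi|.\<close>
definition reduced :: "bistate \<Rightarrow> 2 \<Rightarrow> 2 \<Rightarrow> complex" where
  "reduced psi i k = (\<Sum>j\<in>UNIV. psi $ i $ j * cnj (psi $ k $ j))"

definition max_ent :: "bistate \<Rightarrow> bool" where
  "max_ent psi \<longleftrightarrow> (\<forall>i k. reduced psi i k = (if i = k then 1/2 else 0))"

end

theory Submission
  imports Defs
begin

lemma sum_swap3:
  "(\<Sum>a\<in>A. \<Sum>i\<in>B. \<Sum>k\<in>C. f a i k) = (\<Sum>i\<in>B. \<Sum>k\<in>C. \<Sum>a\<in>A. f a i k)"
  by (subst sum.swap) (rule sum.cong[OF refl], rule sum.swap)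

lemma sum_swap4:
  "(\<Sum>a\<in>A. \<Sum>i\<in>B. \<Sum>k\<in>C. \<Sum>l\<in>D. f a i k l) = (\<Sum>i\<in>B. \<Sum>k\<in>C. \<Sum>l\<in>D. \<Sum>a\<in>A. f a i k l)"
  by (subst sum_swap3) (rule sum.cong[OF refl], rule sum.cong[OF refl], rule sum.swap)

lemma complete_onb:
  fixes g :: "'n::finite \<Rightarrow> complex^'n"
  assumes on: "\<And>a b. cinner (g a) (g b) = (if a = b then 1 else 0)"
  shows "(\<Sum>a\<in>UNIV. g a $ i * cnj (g a $ k)) = (if i = k then 1 else 0)"
proof -
  define A :: "complex^'n^'n" where "A = (\<chi> a i. cnj (g a $ i))"
  define B :: "complex^'n^'n" where "B = (\<chi> i a. g a $ i)"
  have "A ** B = mat 1"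
    using on by (simp add: vec_eq_iff matrix_matrix_mult_def mat_def A_def B_def cinner_def)
  then have "B ** A = mat 1" using matrix_left_right_inverse by blast
  then have "(B ** A) $ i $ k = mat 1 $ i $ k" by simp
  then show ?thesis
    by (simp add: matrix_matrix_mult_def mat_def A_def B_def)
qed

lemma parseval:
  fixes g :: "'n::finite \<Rightarrow> complex^'n"
  assumes on: "\<And>a b. cinner (g a) (g b) = (if a = b then 1 else 0)"
  shows "cinner r r' = (\<Sum>a\<in>UNIV. cnj (cinner (g a) r) * cinner (g a) r')"
proof -
  have "(\<Sum>a\<in>UNIV. cnj (cinner (g a) r) * cinner (g a) r')
     = (\<Sum>a\<in>UNIV. \<Sum>i\<in>UNIV. \<Sum>k\<in>UNIV. cnj (r$i) * r'$k * (g a $ i * cnj (g a $ k)))"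
    by (simp add: cinner_def sum_distrib_left sum_distrib_right mult_ac)
  also have "\<dots> = (\<Sum>i\<in>UNIV. \<Sum>k\<in>UNIV. cnj (r$i) * r'$k * (\<Sum>a\<in>UNIV. g a $ i * cnj (g a $ k)))"
    by (subst sum_swap3) (simp add: sum_distrib_left)
  also have "\<dots> = (\<Sum>i\<in>UNIV. \<Sum>k\<in>UNIV. cnj (r$i) * r'$k * (if i = k then 1 else 0))"
    by (simp add: complete_onb[OF on])
  also have "\<dots> = cinner r r'"
    by (simp add: cinner_def if_distrib cong: if_cong)
  finally show ?thesis by simp
qed

definition rowv :: "bistate \<Rightarrow> qubit \<Rightarrow> qutrit" where
  "rowv x u = (\<chi> j. \<Sum>i\<in>UNIV. cnj (u$i) * x$i$j)"

lemma rowv_me: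
  assumes "max_ent x"
  shows "cinner (rowv x u) (rowv x v) = cinner v u / 2"
proof -
  have R: "\<And>i k. (\<Sum>j\<in>UNIV. cnj (x$i$j) * x$k$j) = (if i = k then 1/2 else 0)"
  proof -
    fix i k
    have "(\<Sum>j\<in>UNIV. cnj (x$i$j) * x$k$j) = cnj (reduced x i k)"
      by (simp add: reduced_def mult.commute)
    then show "(\<Sum>j\<in>UNIV. cnj (x$i$j) * x$k$j) = (if i = k then 1/2 else 0)"
      using assms by (simp add: max_ent_def)
  qed
  have "cinner (rowv x u) (rowv x v)
     = (\<Sum>j\<in>UNIV. \<Sum>k\<in>UNIV. \<Sum>i\<in>UNIV. u$i * cnj (v$k) * (cnj (x$i$j) * x$k$j))"
    by (simp add: cinner_def rowv_def sum_distrib_left sum_distrib_right mult_ac)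
  also have "\<dots> = (\<Sum>k\<in>UNIV. \<Sum>i\<in>UNIV. u$i * cnj (v$k) * (\<Sum>j\<in>UNIV. cnj (x$i$j) * x$k$j))"
    by (subst sum_swap3) (simp add: sum_distrib_left)
  also have "\<dots> = (\<Sum>k\<in>UNIV. \<Sum>i\<in>UNIV. u$i * cnj (v$k) * (if i = k then 1/2 else 0))"
    by (simp add: R)
  also have "\<dots> = cinner v u / 2"
    by (simp add: cinner_def if_distrib sum_divide_distrib mult_ac cong: if_cong)
  finally show ?thesis .
qed

lemma binner_tensor:
  "binner (tensor e f) x = cinner f (rowv x e)"
  unfolding binner_def tensor_def cinner_def rowv_def
  by (simp add: sum_distrib_left mult_ac) (rule sum.swap)

lemma binner_rows:
  fixes g :: "2 \<Rightarrow> complex^2"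
  assumes on: "\<And>a b. cinner (g a) (g b) = (if a = b then 1 else 0)"
  shows "binner x y = (\<Sum>a\<in>UNIV. cinner (rowv x (g a)) (rowv y (g a)))"
proof -
  have "(\<Sum>a\<in>UNIV. cinner (rowv x (g a)) (rowv y (g a)))
     = (\<Sum>a\<in>UNIV. \<Sum>j\<in>UNIV. \<Sum>k\<in>UNIV. \<Sum>i\<in>UNIV. cnj (x$i$j) * y$k$j * (g a $ i * cnj (g a $ k)))"
    by (simp add: cinner_def rowv_def sum_distrib_left sum_distrib_right mult_ac)
  also have "\<dots> = (\<Sum>j\<in>UNIV. \<Sum>k\<in>UNIV. \<Sum>i\<in>UNIV. cnj (x$i$j) * y$k$j * (\<Sum>a\<in>UNIV. g a $ i * cnj (g a $ k)))"
    by (subst sum_swap4) (simp add: sum_distrib_left)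
  also have "\<dots> = (\<Sum>j\<in>UNIV. \<Sum>k\<in>UNIV. \<Sum>i\<in>UNIV. cnj (x$i$j) * y$k$j * (if i = k then 1 else 0))"
    by (simp add: complete_onb[OF on])
  also have "\<dots> = binner x y"
    by (simp add: binner_def if_distrib cong: if_cong) (rule sum.swap)
  finally show ?thesis by simp
qed

lemma cinner_sym: "cinner y x = cnj (cinner x y)"
  by (simp add: cinner_def mult.commute)

lemma binner_diff: "binner (bscale c (p - q)) x = cnj c * (binner p x - binner q x)"
  by (simp add: binner_def bscale_def sum_subtractf sum_distrib_left algebra_simps)

lemma binner_add: "binner (bscale c (p + q)) x = cnj c * (binner p x + binner q x)"
  by (simp add: binner_def bscale_def sum.distrib sum_distrib_left algebra_simps)

lemma parseval3:
  assumes "onb3 f0 f1 f2"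
  shows "cinner r r' = cnj (cinner f0 r) * cinner f0 r' + cnj (cinner f1 r) * cinner f1 r'
                      + cnj (cinner f2 r) * cinner f2 r'"
proof -
  define g :: "3 \<Rightarrow> complex^3" where "g = (\<lambda>b. if b = 1 then f0 else if b = 2 then f1 else f2)"
  have on: "cinner (g a) (g b) = (if a = b then 1 else 0)" for a b
    using assms exhaust_3[of a] exhaust_3[of b]
    by (auto simp: g_def onb3_def cinner_sym[of f1 f0] cinner_sym[of f2 f0] cinner_sym[of f2 f1])
  show ?thesis using parseval[OF on, of r r'] by (simp add: sum_3 g_def)
qed

lemma rows2:
  assumes "onb2 e0 e1"
  shows "binner x y = cinner (rowv x e0) (rowv y e0) + cinner (rowv x e1) (rowv y e1)"
proof -
  define g :: "2 \<Rightarrow> complex^2" where "g = (\<lambda>b. if b = 1 then e0 else e1)"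
  have on: "cinner (g a) (g b) = (if a = b then 1 else 0)" for a b
    using assms exhaust_2[of a] exhaust_2[of b]
    by (auto simp: g_def onb2_def cinner_sym[of e1 e0])
  show ?thesis using binner_rows[OF on, of x y] by (simp add: sum_2 g_def)
qed

lemma struct:
  assumes o2: "onb2 e0 e1" and o3: "onb3 f0 f1 f2" and me: "max_ent x" and c: "c \<noteq> 0"
    and h1: "binner (bscale c (tensor e0 f0 - tensor e1 f1)) x = 0"
    and h2: "binner (bscale c (tensor e0 f1 + tensor e1 f0)) x = 0"
    and h3: "binner (bscale c (tensor e0 f1 - tensor e1 f0)) x = 0"
  shows "cinner f1 (rowv x e0) = 0 \<and> cinner f0 (rowv x e1) = 0 \<and> cinner f2 (rowv x e0) = 0
    \<and> cinner f2 (rowv x e1) = 0 \<and> cinner f1 (rowv x e1) = cinner f0 (rowv x e0)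
    \<and> cnj (cinner f0 (rowv x e0)) * cinner f0 (rowv x e0) = 1/2"
proof -
  define a where "a = cinner f0 (rowv x e0)"
  define p where "p = cinner f2 (rowv x e0)"
  define q where "q = cinner f2 (rowv x e1)"
  have cc: "cnj c \<noteq> 0" using c by simp
  have E1: "cinner f0 (rowv x e0) = cinner f1 (rowv x e1)"
    using h1 cc by (simp add: binner_diff binner_tensor)
  have E2: "cinner f1 (rowv x e0) + cinner f0 (rowv x e1) = 0"
    using h2 cc by (simp add: binner_add binner_tensor)
  have E3: "cinner f1 (rowv x e0) - cinner f0 (rowv x e1) = 0"
    using h3 cc by (simp add: binner_diff binner_tensor)
  have z1: "cinner f1 (rowv x e0) = 0" and z2: "cinner f0 (rowv x e1) = 0"
  proof -
    have "2 * cinner f1 (rowv x e0) = 0" using E2 E3 by (simp add: algebra_simps)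
    then show "cinner f1 (rowv x e0) = 0" by simp
    then show "cinner f0 (rowv x e1) = 0" using E3 by simp
  qed
  have n0: "cinner (rowv x e0) (rowv x e0) = 1/2"
    using rowv_me[OF me, of e0 e0] o2 by (simp add: onb2_def)
  have n1: "cinner (rowv x e1) (rowv x e1) = 1/2"
    using rowv_me[OF me, of e1 e1] o2 by (simp add: onb2_def)
  have n01: "cinner (rowv x e0) (rowv x e1) = 0"
    using rowv_me[OF me, of e0 e1] o2 by (simp add: onb2_def cinner_sym[of e1 e0])
  have A: "cnj a * a + cnj p * p = 1/2"
    using n0 parseval3[OF o3, of "rowv x e0" "rowv x e0"] z1 by (simp add: a_def p_def)
  have B: "cnj a * a + cnj q * q = 1/2"
    using n1 parseval3[OF o3, of "rowv x e1" "rowv x e1"] z2 E1 by (simp add: a_def q_def)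
  have C: "cnj p * q = 0"
    using n01 parseval3[OF o3, of "rowv x e0" "rowv x e1"] z1 z2 by (simp add: a_def p_def q_def)
  have pq: "cnj p * p = cnj q * q"
  proof -
    have "cnj a * a + cnj p * p = cnj a * a + cnj q * q" by (simp only: A B)
    then show ?thesis by (rule add_left_imp_eq)
  qed
  have "p = 0"
  proof (rule ccontr)
    assume "p \<noteq> 0"
    then have "q = 0" using C by simp
    then have "cnj p * p = 0" using pq by simp
    then show False using \<open>p \<noteq> 0\<close> by simp
  qed
  moreover have "q = 0" using pq \<open>p = 0\<close> by simp
  ultimately show ?thesis using z1 z2 E1 A by (simp add: a_def p_def q_def)
qed

lemma pair_nonorth:
  assumes o2: "onb2 e0 e1" and o3: "onb3 f0 f1 f2" and mx: "max_ent x" and my: "max_ent y"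
    and c: "c \<noteq> 0"
    and x1: "binner (bscale c (tensor e0 f0 - tensor e1 f1)) x = 0"
    and x2: "binner (bscale c (tensor e0 f1 + tensor e1 f0)) x = 0"
    and x3: "binner (bscale c (tensor e0 f1 - tensor e1 f0)) x = 0"
    and y1: "binner (bscale c (tensor e0 f0 - tensor e1 f1)) y = 0"
    and y2: "binner (bscale c (tensor e0 f1 + tensor e1 f0)) y = 0"
    and y3: "binner (bscale c (tensor e0 f1 - tensor e1 f0)) y = 0"
  shows "binner x y \<noteq> 0"
proof -
  note SX = struct[OF o2 o3 mx c x1 x2 x3]
  note SY = struct[OF o2 o3 my c y1 y2 y3]
  define a where "a = cinner f0 (rowv x e0)"
  define b where "b = cinner f0 (rowv y e0)"
  have "binner x y = cinner (rowv x e0) (rowv y e0) + cinner (rowv x e1) (rowv y e1)"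
    by (rule rows2[OF o2])
  also have "\<dots> = 2 * (cnj a * b)"
    using parseval3[OF o3, of "rowv x e0" "rowv y e0"] parseval3[OF o3, of "rowv x e1" "rowv y e1"] SX SY
    by (simp add: a_def b_def)
  finally have eq: "binner x y = 2 * (cnj a * b)" .
  have "a \<noteq> 0" using SX by (auto simp: a_def)
  moreover have "b \<noteq> 0" using SY by (auto simp: b_def)
  ultimately show ?thesis using eq by simp
qed

theorem proposition3:
  fixes e0 e1 :: qubit and f0 f1 f2 :: qutrit
  assumes "onb2 e0 e1" and "onb3 f0 f1 f2"
  defines "s1 \<equiv> bscale (1 / sqrt 2) (tensor e0 f0 - tensor e1 f1)"
      and "s2 \<equiv> bscale (1 / sqrt 2) (tensor e0 f1 + tensor e1 f0)"
      and "s3 \<equiv> bscale (1 / sqrt 2) (tensor e0 f1 - tensor e1 f0)"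
  shows "\<not> (\<exists>x y z. (\<forall>s\<in>{s1, s2, s3}. \<forall>w\<in>{x, y, z}. binner s w = 0)
                  \<and> max_ent x \<and> max_ent y \<and> max_ent z
                  \<and> binner x y = 0 \<and> binner x z = 0 \<and> binner y z = 0)
       \<and> \<not> (\<exists>x y z. max_ent x \<and> max_ent y \<and> max_ent z \<and>
                  (\<forall>u\<in>{s1, s2, s3, x, y, z}. \<forall>v\<in>{s1, s2, s3, x, y, z}.
                     binner u v = (if u = v then 1 else 0))
                  \<and> card {s1, s2, s3, x, y, z} = 6)"
proof -
  have c: "(1 / sqrt 2 :: complex) \<noteq> 0" by simp
  have P: "binner x y \<noteq> 0" if "max_ent x" "max_ent y" "binner s1 x = 0" "binner s2 x = 0"
    "binner s3 x = 0" "binner s1 y = 0" "binner s2 y = 0" "binner s3 y = 0" for x y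
    using pair_nonorth[OF assms(1,2) that(1,2) c] that(3-) by (simp add: s1_def s2_def s3_def)
  show ?thesis
  proof (intro conjI notI)
    assume "\<exists>x y z. (\<forall>s\<in>{s1, s2, s3}. \<forall>w\<in>{x, y, z}. binner s w = 0)
                  \<and> max_ent x \<and> max_ent y \<and> max_ent z
                  \<and> binner x y = 0 \<and> binner x z = 0 \<and> binner y z = 0"
    then obtain x y z where "\<forall>s\<in>{s1, s2, s3}. \<forall>w\<in>{x, y, z}. binner s w = 0"
      "max_ent x" "max_ent y" "binner x y = 0" by blast
    then show False using P[of x y] by simp
  next
    assume "\<exists>x y z. max_ent x \<and> max_ent y \<and> max_ent z \<and>
                  (\<forall>u\<in>{s1, s2, s3, x, y, z}. \<forall>v\<in>{s1, s2, s3, x, y, z}.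
                     binner u v = (if u = v then 1 else 0))
                  \<and> card {s1, s2, s3, x, y, z} = 6"
    then obtain x y z where m: "max_ent x" "max_ent y"
      and o: "\<forall>u\<in>{s1, s2, s3, x, y, z}. \<forall>v\<in>{s1, s2, s3, x, y, z}.
                     binner u v = (if u = v then 1 else 0)"
      and cd: "card {s1, s2, s3, x, y, z} = 6" by blast
    have "card (set [s1, s2, s3, x, y, z]) = length [s1, s2, s3, x, y, z]"
      using cd by simp
    then have d: "distinct [s1, s2, s3, x, y, z]" by (rule card_distinct)
    have ne: "s1 \<noteq> x" "s2 \<noteq> x" "s3 \<noteq> x" "s1 \<noteq> y" "s2 \<noteq> y" "s3 \<noteq> y" "x \<noteq> y"
      using d by auto
    have "binner x y \<noteq> 0"
    proof (rule P[OF m])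
      show "binner s1 x = 0" using o[rule_format, of s1 x] ne by simp
      show "binner s2 x = 0" using o[rule_format, of s2 x] ne by simp
      show "binner s3 x = 0" using o[rule_format, of s3 x] ne by simp
      show "binner s1 y = 0" using o[rule_format, of s1 y] ne by simp
      show "binner s2 y = 0" using o[rule_format, of s2 y] ne by simp
      show "binner s3 y = 0" using o[rule_format, of s3 y] ne by simp
    qed
    moreover have "binner x y = 0" using o[rule_format, of x y] ne by simp
    ultimately show False by simp
  qed
qed

end
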